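(* Suppose Assumption 1 holds and let $\gamma\in(0,1]$. (i) Let $x\in\operatorname{dom}\psi$, let $H$ be symmetric with $Q^x_H$ $\sigma$-strongly convex for some $\sigma>0$, and let $d$ satisfy the $\eta$-inexactness condition for $Q^x_H$ for some $\eta\in[0,1)$. If $$(1-\gamma)\frac{1-\sqrt\eta}{1+\sqrt\eta}\,\sigma + \lambda_{\min}(H)\ge L,$$ then the sufficient decrease condition $F(x)-F(x+d)\ge -\gamma Q^x_H(d)\ge 0$ holds. (ii) Consequently, in Algorithm 2 (with every computed $d^k$ satisfying the $\eta$-inexactness condition for a fixed $\eta\in[0,1)$), if the initial matrix satisfies $m_0 I\preceq H^0_k\preceq M_0 I$ for some $M_0>0$ and $m_0\le M_0$, then for Variant 2 the final (accepted) $H_k$ satisfies $\|H_k\|\le \tilde M_2(\eta)$; and for Variant 1, if in addition $m_0>0$, the final $H_k$ satisfies $\|H_k\|\le\tilde M_1(\eta)$.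
   Context: Problem setting: $F(x)=f(x)+\psi(x)$ on $\mathbb{R}^n$. Assumption 1: $f:\mathbb{R}^n\to\mathbb{R}$ is differentiable with $L$-Lipschitz continuous gradient for some $L>0$; $\psi:\mathbb{R}^n\to\mathbb{R}\cup\{+\infty\}$ is convex, proper and closed; $F$ is bounded below; and the solution set $\Omega=\{x: F(x)=F^*\}$, $F^*=\inf F$, is nonempty. For $x\in\mathbb{R}^n$ and a symmetric matrix $H$, $Q^x_H(d) \coloneqq \nabla f(x)^T d + \frac12 d^T H d + \psi(x+d) - \psi(x)$ (so $Q^x_H(0)=0$) and $Q^*\coloneqq\inf_d Q^x_H(d)$. A vector $d$ satisfies the $\eta$-inexactness condition (for $Q=Q^x_H$) if $Q(d)-Q^*\le \eta(Q(0)-Q^* )$, equivalently $Q(d)\le(1-\eta)Q^*$. $\lambda_{\min}(H)$ is the smallest eigenvalue, $\|H\|$ the spectral norm. Algorithm 2: given $\beta\in(0,1)$, $\gamma\in(0,1]$, $x^0$, and fixed $\eta\in[0,1)$; for $k=0,1,2,\dots$: choose a symmetric initial matrix $H^0_k$ (in Variant 1, $H^0_k\succ0$); set $\alpha_k\leftarrow1$, $H_k\leftarrow H^0_k$, and compute $d^k$ satisfying the $\eta$-inexactness condition for $Q^{x^k}_{H_k}$; while the sufficient decrease condition $F(x^k)-F(x^k+d^k)\ge -\gamma Q^{x^k}_{H_k}(d^k)\ge 0$ fails: in Variant 1 set $\alpha_k\leftarrow\beta\alpha_k$ and $H_k\leftarrow H^0_k/\alpha_k$; in Variant 2 set $H_k\leftarrow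 H^0_k+\alpha_k^{-1}I$ and then $\alpha_k\leftarrow\beta\alpha_k$; then recompute $d^k$ satisfying the $\eta$-inexactness condition for $Q^{x^k}_{H_k}$. Finally set $x^{k+1}=x^k+d^k$. The "final" $H_k$ is the matrix for which the sufficient decrease condition is accepted. Constants: $\tilde M_2(\eta)\coloneqq M_0+\max\left\{1,\ \frac1\beta\left(\frac{L(1+\sqrt\eta)}{2-\gamma(1-\sqrt\eta)}-m_0\right)\right\}$ and $\tilde M_1(\eta)\coloneqq M_0\max\left\{1,\ \frac{L(1+\sqrt\eta)}{\beta(2-\gamma(1-\sqrt\eta))m_0}\right\}$. *)

theory Defs
  imports "HOL-Analysis.Analysis"
begin

definition edom :: "('a \<Rightarrow> ereal) \<Rightarrow> 'a set" where
  "edom h = {x. h x < \<infinity>}"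

definition econvex :: "('a::real_vector \<Rightarrow> ereal) \<Rightarrow> bool" where
  "econvex h \<longleftrightarrow> convex {(x, r::real). h x \<le> ereal r}"

definition eproper :: "('a \<Rightarrow> ereal) \<Rightarrow> bool" where
  "eproper h \<longleftrightarrow> (\<forall>x. h x \<noteq> -\<infinity>) \<and> (\<exists>x. h x \<noteq> \<infinity>)"

definition eclosed :: "('a::topological_space \<Rightarrow> ereal) \<Rightarrow> bool" where
  "eclosed h \<longleftrightarrow> closed {(x, r::real). h x \<le> ereal r}"

definition estrongly_convex :: "real \<Rightarrow> ('a::real_normed_vector \<Rightarrow> ereal) \<Rightarrow> bool" where
  "estrongly_convex \<sigma> h \<longleftrightarrow>
     (\<forall>a b t. 0 < t \<and> t < 1 \<longrightarrow>
        h (t *\<^sub>R a + (1 - t) *\<^sub>R b)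
          \<le> ereal t * h a + ereal (1 - t) * h b - ereal (\<sigma> / 2 * t * (1 - t) * (norm (a - b))\<^sup>2))"

definition symmetric_mat :: "real^'n^'n \<Rightarrow> bool" where
  "symmetric_mat H \<longleftrightarrow> transpose H = H"

text \<open>Smallest eigenvalue (the eigenvalue set of a real symmetric matrix is finite and nonempty).\<close>
definition lambda_min :: "real^'n^'n \<Rightarrow> real" where
  "lambda_min H = Inf {\<mu>. \<exists>v. v \<noteq> 0 \<and> H *v v = \<mu> *\<^sub>R v}"

definition spec_norm :: "real^'n^'n \<Rightarrow> real" where
  "spec_norm H = onorm (\<lambda>v. H *v v)"

definition loewner_le :: "real^'n^'n \<Rightarrow> real^'n^'n \<Rightarrow> bool" where
  "loewner_le A B \<longleftrightarrow> (\<forall>v. v \<bullet> (A *v v) \<le> v \<bullet> (B *v v))"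

definition Fobj :: "(real^'n \<Rightarrow> real) \<Rightarrow> (real^'n \<Rightarrow> ereal) \<Rightarrow> real^'n \<Rightarrow> ereal" where
  "Fobj f \<psi> x = ereal (f x) + \<psi> x"

text \<open>Q^x_H(d), with g the gradient of f.\<close>
definition Qm :: "(real^'n \<Rightarrow> real^'n) \<Rightarrow> (real^'n \<Rightarrow> ereal) \<Rightarrow> real^'n \<Rightarrow> real^'n^'n \<Rightarrow> real^'n \<Rightarrow> ereal" where
  "Qm g \<psi> x H d = ereal (g x \<bullet> d + 1/2 * (d \<bullet> (H *v d))) + \<psi> (x + d) - \<psi> x"

definition inexact :: "real \<Rightarrow> ('a \<Rightarrow> ereal) \<Rightarrow> 'a::zero \<Rightarrow> bool" where
  "inexact \<eta> Q d \<longleftrightarrow> Q d - (INF e. Q e) \<le> ereal \<eta> * (Q 0 - (INF e. Q e))"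

definition suff_dec :: "(real^'n \<Rightarrow> real) \<Rightarrow> (real^'n \<Rightarrow> ereal) \<Rightarrow> (real^'n \<Rightarrow> ereal)
    \<Rightarrow> real \<Rightarrow> real^'n \<Rightarrow> real^'n \<Rightarrow> bool" where
  "suff_dec f \<psi> Q \<gamma> x d \<longleftrightarrow>
     Fobj f \<psi> x - Fobj f \<psi> (x + d) \<ge> - (ereal \<gamma> * Q d) \<and> - (ereal \<gamma> * Q d) \<ge> 0"

text \<open>Trial matrices of the backtracking loop (i = number of rejections so far).
  Variant 1: alpha = beta^i and H = H0 / alpha.
  Variant 2: H = H0 at i = 0, and H = H0 + beta^(-(i-1)) I afterwards.\<close>
definition cand1 :: "real \<Rightarrow> real^'n^'n \<Rightarrow> nat \<Rightarrow> real^'n^'n" where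
  "cand1 \<beta> H0 i = (1 / \<beta> ^ i) *\<^sub>R H0"

definition cand2 :: "real \<Rightarrow> real^'n^'n \<Rightarrow> nat \<Rightarrow> real^'n^'n" where
  "cand2 \<beta> H0 i = (if i = 0 then H0 else H0 + (1 / \<beta> ^ (i - 1)) *\<^sub>R mat 1)"

text \<open>A run of Algorithm 2 with trial-matrix rule cand: x k are the iterates, H0 k the
  initial matrices, J k the number of rejected trials in iteration k (so the final
  matrix is cand (H0 k) (J k)), and D k i the direction computed for the i-th trial.\<close>
definition alg2_run :: "(real^'n^'n \<Rightarrow> nat \<Rightarrow> real^'n^'n) \<Rightarrow> (real^'n \<Rightarrow> real)
    \<Rightarrow> (real^'n \<Rightarrow> real^'n) \<Rightarrow> (real^'n \<Rightarrow> ereal) \<Rightarrow> real \<Rightarrow> real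
    \<Rightarrow> (nat \<Rightarrow> real^'n) \<Rightarrow> (nat \<Rightarrow> real^'n^'n) \<Rightarrow> (nat \<Rightarrow> nat) \<Rightarrow> (nat \<Rightarrow> nat \<Rightarrow> real^'n) \<Rightarrow> bool" where
  "alg2_run cand f g \<psi> \<gamma> \<eta> x H0 J D \<longleftrightarrow>
     (\<forall>k. symmetric_mat (H0 k)) \<and>
     (\<forall>k i. i \<le> J k \<longrightarrow> inexact \<eta> (Qm g \<psi> (x k) (cand (H0 k) i)) (D k i)) \<and>
     (\<forall>k i. i < J k \<longrightarrow> \<not> suff_dec f \<psi> (Qm g \<psi> (x k) (cand (H0 k) i)) \<gamma> (x k) (D k i)) \<and>
     (\<forall>k. suff_dec f \<psi> (Qm g \<psi> (x k) (cand (H0 k) (J k))) \<gamma> (x k) (D k (J k))) \<and>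
     (\<forall>k. x (Suc k) = x k + D k (J k))"

definition M2tilde :: "real \<Rightarrow> real \<Rightarrow> real \<Rightarrow> real \<Rightarrow> real \<Rightarrow> real \<Rightarrow> real" where
  "M2tilde L \<beta> \<gamma> m0 M0 \<eta> =
     M0 + max 1 ((1 / \<beta>) * (L * (1 + sqrt \<eta>) / (2 - \<gamma> * (1 - sqrt \<eta>)) - m0))"

definition M1tilde :: "real \<Rightarrow> real \<Rightarrow> real \<Rightarrow> real \<Rightarrow> real \<Rightarrow> real \<Rightarrow> real" where
  "M1tilde L \<beta> \<gamma> m0 M0 \<eta> =
     M0 * max 1 (L * (1 + sqrt \<eta>) / (\<beta> * (2 - \<gamma> * (1 - sqrt \<eta>)) * m0))"

end

theory Submission
  imports Defs
begin


lemma sym_inner: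
  fixes H :: "real^'n^'n"
  assumes "symmetric_mat H"
  shows "u \<bullet> (H *v w) = (H *v u) \<bullet> w"
proof -
  have "u \<bullet> (H *v w) = (u v* H) \<bullet> w" by (simp add: dot_lmul_matrix)
  also have "u v* H = H *v u" using assms vector_transpose_matrix[of u H]
    by (simp add: symmetric_mat_def)
  finally show ?thesis .
qed

lemma quad_cont: "continuous_on S (\<lambda>w::real^'n. w \<bullet> (H *v w))"
  by (intro continuous_intros)

lemma min_eig:
  fixes H :: "real^'n^'n"
  assumes sym: "symmetric_mat H"
  shows "\<exists>v \<mu>. v \<noteq> 0 \<and> H *v v = \<mu> *\<^sub>R v \<and> (\<forall>w. \<mu> * (norm w)\<^sup>2 \<le> w \<bullet> (H *v w))"
proof -
  have ne: "sphere (0::real^'n) 1 \<noteq> {}"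
  proof -
    have "axis undefined (1::real) \<in> sphere (0::real^'n) 1" by simp
    then show ?thesis by blast
  qed
  obtain v where v: "v \<in> sphere (0::real^'n) 1" and vmin: "\<forall>y\<in>sphere 0 1. v \<bullet> (H *v v) \<le> y \<bullet> (H *v y)"
    using continuous_attains_inf[OF compact_sphere ne quad_cont] by blast
  define \<mu> where "\<mu> = v \<bullet> (H *v v)"
  have ray: "\<mu> * (norm w)\<^sup>2 \<le> w \<bullet> (H *v w)" for w
  proof (cases "w = 0")
    case True then show ?thesis by simp
  next
    case False
    then have "w /\<^sub>R norm w \<in> sphere 0 1" by simp
    from vmin[rule_format, OF this] have "\<mu> \<le> (w /\<^sub>R norm w) \<bullet> (H *v (w /\<^sub>R norm w))"
      by (simp add: \<mu>_def)
    also have "\<dots> = (w \<bullet> (H *v w)) / (norm w)\<^sup>2"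
      by (simp add: matrix_vector_mult_scaleR power2_eq_square divide_inverse)
    finally show ?thesis using False by (simp add: field_simps)
  qed
  define A where "A = H - \<mu> *\<^sub>R mat 1"
  have Aw: "A *v w = H *v w - \<mu> *\<^sub>R w" for w
    by (simp add: A_def matrix_vector_mult_diff_rdistrib scaleR_matrix_vector_assoc[symmetric])
  have psd: "0 \<le> w \<bullet> (A *v w)" for w
    using ray[of w] by (simp add: Aw inner_diff_right power2_norm_eq_inner)
  have vnorm: "norm v = 1" using v by simp
  have v0: "v \<bullet> (A *v v) = 0"
    using vnorm by (simp add: Aw inner_diff_right \<mu>_def power2_norm_eq_inner[symmetric])
  have symA: "u \<bullet> (A *v w) = (A *v u) \<bullet> w" for u w
    using sym_inner[OF sym, of u w] by (simp add: Aw inner_diff_right inner_diff_left inner_commute)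
  have orth: "w \<bullet> (A *v v) = 0" for w
  proof (rule ccontr)
    assume c: "w \<bullet> (A *v v) \<noteq> 0"
    define c where "c = w \<bullet> (A *v v)"
    define k where "k = w \<bullet> (A *v w)"
    have k: "0 \<le> k" using psd by (simp add: k_def)
    have exp: "(v + t *\<^sub>R w) \<bullet> (A *v (v + t *\<^sub>R w)) = 2 * t * c + t\<^sup>2 * k" for t
    proof -
      have "(v + t *\<^sub>R w) \<bullet> (A *v (v + t *\<^sub>R w)) = v \<bullet> (A *v v) + t * (v \<bullet> (A *v w)) + t * (w \<bullet> (A *v v)) + t * t * (w \<bullet> (A *v w))"
        by (simp add: matrix_vector_right_distrib inner_add_left inner_add_right
            scaleR_matrix_vector_assoc[symmetric] matrix_vector_mult_scaleR algebra_simps)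
      moreover have "v \<bullet> (A *v w) = w \<bullet> (A *v v)" using symA[of v w] by (simp add: inner_commute)
      ultimately show ?thesis using v0 by (simp add: c_def k_def power2_eq_square)
    qed
    define t where "t = - c / (k + 1)"
    have kp: "k + 1 > 0" using k by simp
    have tk: "t * (k + 1) = - c" unfolding t_def using kp by simp
    have h1: "0 \<le> 2 * t * c + t\<^sup>2 * k" using psd[of "v + t *\<^sub>R w"] exp[of t] by simp
    have h2: "t\<^sup>2 * (k + 1) = t\<^sup>2 * k + t\<^sup>2" by (simp only: distrib_left mult_1_right)
    have h2': "0 \<le> t\<^sup>2" by (rule zero_le_power2)
    have h3a: "t\<^sup>2 * (k + 1) = t * (t * (k + 1))" by (simp add: power2_eq_square)
    have h3: "t\<^sup>2 * (k + 1) = - (t * c)" using h3a tk by simp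
    have h4: "t * c = - c\<^sup>2 / (k + 1)" unfolding t_def by (simp add: power2_eq_square)
    have h5: "- c\<^sup>2 / (k + 1) < 0" using kp c by (simp add: c_def)
    show False using h1 h2 h2' h3 h4 h5 by linarith
  qed
  have "A *v v = 0" using orth[of "A *v v"] by simp
  then have "H *v v = \<mu> *\<^sub>R v" by (simp add: Aw)
  moreover have "v \<noteq> 0" using vnorm by auto
  ultimately show ?thesis using ray by blast
qed

lemma lmin_eq:
  fixes H :: "real^'n^'n"
  assumes sym: "symmetric_mat H"
  shows "\<exists>v. v \<noteq> 0 \<and> H *v v = lambda_min H *\<^sub>R v \<and> (\<forall>w. lambda_min H * (norm w)\<^sup>2 \<le> w \<bullet> (H *v w))"
proof -
  obtain v \<mu> where v: "v \<noteq> 0" "H *v v = \<mu> *\<^sub>R v" and r: "\<forall>w. \<mu> * (norm w)\<^sup>2 \<le> w \<bullet> (H *v w)"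
    using min_eig[OF sym] by blast
  have "lambda_min H = \<mu>"
    unfolding lambda_min_def
  proof (rule cInf_eq_minimum)
    show "\<mu> \<in> {\<mu>. \<exists>v. v \<noteq> 0 \<and> H *v v = \<mu> *\<^sub>R v}" using v by blast
  next
    fix x assume "x \<in> {\<mu>. \<exists>v. v \<noteq> 0 \<and> H *v v = \<mu> *\<^sub>R v}"
    then obtain u where u: "u \<noteq> 0" "H *v u = x *\<^sub>R u" by blast
    have "\<mu> * (norm u)\<^sup>2 \<le> x * (norm u)\<^sup>2"
      using r[rule_format, of u] u by (simp add: power2_norm_eq_inner)
    then show "\<mu> \<le> x" using u by simp
  qed
  then show ?thesis using v r by auto
qed

lemma lmin_ray:
  fixes H :: "real^'n^'n"
  assumes "symmetric_mat H"
  shows "lambda_min H * (norm w)\<^sup>2 \<le> w \<bullet> (H *v w)"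
  using lmin_eq[OF assms] by blast

lemma lmin_ge:
  fixes H :: "real^'n^'n"
  assumes "symmetric_mat H" and "\<And>w. a * (norm w)\<^sup>2 \<le> w \<bullet> (H *v w)"
  shows "a \<le> lambda_min H"
proof -
  obtain v where v: "v \<noteq> 0" "H *v v = lambda_min H *\<^sub>R v" using lmin_eq[OF assms(1)] by blast
  have "a * (norm v)\<^sup>2 \<le> lambda_min H * (norm v)\<^sup>2"
    using assms(2)[of v] v by (simp add: power2_norm_eq_inner)
  then show ?thesis using v by simp
qed

lemma spec_norm_le:
  fixes H :: "real^'n^'n"
  assumes sym: "symmetric_mat H" and b: "\<And>w. \<bar>w \<bullet> (H *v w)\<bar> \<le> K * (norm w)\<^sup>2"
  shows "spec_norm H \<le> K"
  unfolding spec_norm_def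
proof (rule onorm_le)
  fix w :: "real^'n"
  have pol: "4 * (u \<bullet> (H *v w)) \<le> 2 * K * ((norm u)\<^sup>2 + (norm w)\<^sup>2)" for u
  proof -
    have e: "(u + w) \<bullet> (H *v (u + w)) - (u - w) \<bullet> (H *v (u - w)) = 4 * (u \<bullet> (H *v w))"
      using sym_inner[OF sym, of w u]
      by (simp add: matrix_vector_right_distrib matrix_vector_mult_diff_distrib inner_add_left
          inner_add_right inner_diff_left inner_diff_right inner_commute)
    have "(u + w) \<bullet> (H *v (u + w)) \<le> K * (norm (u + w))\<^sup>2" using b[of "u+w"] by simp
    moreover have "- ((u - w) \<bullet> (H *v (u - w))) \<le> K * (norm (u - w))\<^sup>2" using b[of "u-w"] by simp
    moreover have n: "(norm (u + w))\<^sup>2 + (norm (u - w))\<^sup>2 = 2 * ((norm u)\<^sup>2 + (norm w)\<^sup>2)"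
      by (simp add: power2_norm_eq_inner inner_add_left inner_add_right inner_diff_left inner_diff_right inner_commute)
    moreover have "K * (norm (u + w))\<^sup>2 + K * (norm (u - w))\<^sup>2 = 2 * K * ((norm u)\<^sup>2 + (norm w)\<^sup>2)"
      using n by (metis distrib_left mult.assoc mult.commute)
    ultimately show ?thesis using e by linarith
  qed
  show "norm (H *v w) \<le> K * norm w"
  proof (cases "H *v w = 0")
    case True
    have "0 \<le> K * (norm w)\<^sup>2" using b[of w] by linarith
    show ?thesis
    proof (cases "w = 0")
      case False
      then have "0 < (norm w)\<^sup>2" by simp
      then have "0 \<le> K" using \<open>0 \<le> K * (norm w)\<^sup>2\<close> by (metis zero_le_mult_iff not_le)
      then show ?thesis using True by simp
    qed simp
  next
    case False
    define u where "u = (norm w / norm (H *v w)) *\<^sub>R (H *v w)"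
    have nu: "norm u = norm w" using False by (simp add: u_def)
    have uh: "u \<bullet> (H *v w) = norm w * norm (H *v w)"
      using False by (simp add: u_def power2_norm_eq_inner[symmetric] power2_eq_square)
    have "4 * (norm w * norm (H *v w)) \<le> 2 * K * (2 * (norm w)\<^sup>2)"
      using pol[of u] nu uh by simp
    then have "norm w * norm (H *v w) \<le> norm w * (K * norm w)" by (simp add: power2_eq_square algebra_simps)
    moreover have "w \<noteq> 0" using False by auto
    ultimately show ?thesis by simp
  qed
qed



lemma descent:
  fixes f :: "real^'n \<Rightarrow> real" and g :: "real^'n \<Rightarrow> real^'n"
  assumes grad: "\<forall>x. GDERIV f x :> g x" and Llip: "L-lipschitz_on UNIV g"
  shows "f (x + d) \<le> f x + g x \<bullet> d + L / 2 * (norm d)\<^sup>2"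
proof -
  define \<phi> where "\<phi> t = f (x + t *\<^sub>R d) - t * (g x \<bullet> d) - L / 2 * t\<^sup>2 * (norm d)\<^sup>2" for t
  have df: "((\<lambda>t. f (x + t *\<^sub>R d)) has_real_derivative (g (x + t *\<^sub>R d) \<bullet> d)) (at t)" for t
  proof -
    have l: "((\<lambda>t. x + t *\<^sub>R d) has_derivative (\<lambda>s. s *\<^sub>R d)) (at t)"
      by (auto intro!: derivative_eq_intros)
    have "(f has_derivative (\<lambda>h. h \<bullet> g (x + t *\<^sub>R d))) (at (x + t *\<^sub>R d))"
      using grad unfolding gderiv_def by blast
    from has_derivative_compose[OF l this]
    have "((\<lambda>t. f (x + t *\<^sub>R d)) has_derivative (\<lambda>s. (s *\<^sub>R d) \<bullet> g (x + t *\<^sub>R d))) (at t)" .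
    then show ?thesis unfolding has_field_derivative_def
      by (rule has_derivative_eq_rhs) (auto simp: inner_commute)
  qed
  have d\<phi>: "(\<phi> has_real_derivative (g (x + t *\<^sub>R d) \<bullet> d - g x \<bullet> d - L * t * (norm d)\<^sup>2)) (at t)" for t
  proof -
    have a: "((\<lambda>t. t * (g x \<bullet> d)) has_real_derivative (g x \<bullet> d)) (at t)"
      by (auto intro!: derivative_eq_intros)
    have b: "((\<lambda>t. L / 2 * t\<^sup>2 * (norm d)\<^sup>2) has_real_derivative (L * t * (norm d)\<^sup>2)) (at t)"
      by (auto intro!: derivative_eq_intros)
    show ?thesis unfolding \<phi>_def using DERIV_diff[OF DERIV_diff[OF df a] b] by simp
  qed
  have "\<phi> 1 \<le> \<phi> 0"
  proof (rule DERIV_nonpos_imp_nonincreasing[of 0 1 \<phi>])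
    fix t :: real assume t: "0 \<le> t" "t \<le> 1"
    have "g (x + t *\<^sub>R d) \<bullet> d - g x \<bullet> d = (g (x + t *\<^sub>R d) - g x) \<bullet> d" by (simp add: inner_diff_left)
    also have "\<dots> \<le> norm (g (x + t *\<^sub>R d) - g x) * norm d" by (rule norm_cauchy_schwarz)
    also have "norm (g (x + t *\<^sub>R d) - g x) \<le> L * (t * norm d)"
      using lipschitz_onD[OF Llip, of "x + t *\<^sub>R d" x] t by (simp add: dist_norm)
    then have "norm (g (x + t *\<^sub>R d) - g x) * norm d \<le> L * (t * norm d) * norm d"
      by (simp add: mult_right_mono)
    finally have "g (x + t *\<^sub>R d) \<bullet> d - g x \<bullet> d - L * t * (norm d)\<^sup>2 \<le> 0"
      by (simp add: power2_eq_square algebra_simps)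
    then show "\<exists>y. (\<phi> has_real_derivative y) (at t) \<and> y \<le> 0" using d\<phi> by blast
  qed simp
  then show ?thesis by (simp add: \<phi>_def)
qed



lemma key_real:
  fixes \<sigma> \<eta> q u R :: real
  assumes \<sigma>: "\<sigma> > 0" and \<eta>: "0 \<le> \<eta>" "\<eta> < 1" and q: "q \<le> 0" and u: "u \<le> (1 - \<eta>) * q"
    and R: "R \<ge> 0"
    and sc: "\<And>t. 0 < t \<Longrightarrow> t < 1 \<Longrightarrow> q \<le> t * u - \<sigma> / 2 * t * (1 - t) * R"
  shows "\<sigma> / 2 * ((1 - sqrt \<eta>) / (1 + sqrt \<eta>)) * R \<le> - u"
proof -
  define A where "A = \<sigma> / 2 * R"
  have A: "A \<ge> 0" using \<sigma> R by (simp add: A_def)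
  have sc': "q \<le> t * u - A * (t * (1 - t))" if "0 < t" "t < 1" for t
    using sc[OF that] by (simp add: A_def algebra_simps)
  show ?thesis
  proof (cases "\<eta> = 0")
    case True
    then have uq: "u \<le> q" using u by simp
    have "A \<le> - u"
    proof (rule ccontr)
      assume c: "\<not> A \<le> - u"
      have u0: "0 \<le> - u" using uq q by simp
      define t where "t = (1 + (- u) / A) / 2"
      have Ap: "A > 0" using c u0 by simp
      have "- u < A" using c by simp
      then have r: "(- u) / A < 1" using Ap divide_less_eq_1_pos by blast
      have r0: "0 \<le> (- u) / A" using u0 Ap by (intro divide_nonneg_pos) auto
      have t0: "0 < t" "t < 1" using r r0 by (auto simp: t_def)
      have "u \<le> t * u - A * (t * (1 - t))" using sc'[OF t0] uq by simp
      then have "(1 - t) * u \<le> - ((1 - t) * (A * t))" by (simp add: algebra_simps)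
      then have "(1 - t) * u \<le> (1 - t) * (- (A * t))" by simp
      moreover have "0 < 1 - t" using t0 by simp
      ultimately have "u \<le> - (A * t)" by (rule mult_left_le_imp_le)
      moreover have "A * t = (A + (- u)) / 2" using Ap by (simp add: t_def field_simps)
      ultimately have "u \<le> - ((A + - u) / 2)" by simp
      then have "A \<le> - u" by (simp add: field_simps)
      then show False using c by simp
    qed
    then show ?thesis using True by (simp add: A_def)
  next
    case False
    define s where "s = sqrt \<eta>"
    have s: "0 < s" "s < 1" using False \<eta> by (auto simp: s_def)
    have \<eta>s: "\<eta> = s * s" using \<eta> by (simp add: s_def)
    define t where "t = 1 / (1 + s)"
    have t0: "0 < t" "t < 1" using s by (auto simp: t_def)
    have h: "q \<le> t * u - A * (t * (1 - t))" by (rule sc'[OF t0])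
    have h2: "q * (1 - s) * (1 + s) \<ge> u" using u \<eta>s by (simp add: algebra_simps)
    have pos: "(1 - s) * (1 + s)^2 > 0" using s by simp
    have "q * ((1 - s) * (1 + s)^2) \<le> (t * u - A * (t * (1 - t))) * ((1 - s) * (1 + s)^2)"
      using mult_right_mono[OF h less_imp_le[OF pos]] .
    also have "\<dots> = u * (1 - s) * (1 + s) - A * s * (1 - s)"
    proof -
      have t1: "t * (1 + s) = 1" using s by (simp add: t_def)
      have t2: "1 - t = s * t" using t1 by (simp add: algebra_simps)
      have "(t * u - A * (t * (1 - t))) * ((1 - s) * (1 + s)^2)
          = u * (1 - s) * (1 + s) * (t * (1 + s)) - A * s * (1 - s) * (t * (1 + s))^2"
        unfolding t2 by (simp add: power2_eq_square algebra_simps)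
      then show ?thesis unfolding t1 by simp
    qed
    finally have h3: "q * ((1 - s) * (1 + s)^2) \<le> u * (1 - s) * (1 + s) - A * s * (1 - s)" .
    have "q * ((1 - s) * (1 + s)^2) = (q * (1 - s) * (1 + s)) * (1 + s)" by (simp add: power2_eq_square)
    also have "\<dots> \<ge> u * (1 + s)" using mult_right_mono[OF h2, of "1 + s"] s by simp
    finally have "u * (1 + s) \<le> u * (1 - s) * (1 + s) - A * s * (1 - s)" using h3 by simp
    then have "s * (u * (1 + s)) \<le> s * (- A * (1 - s))" by (simp add: algebra_simps)
    then have "s * (u * (1 + s)) \<le> s * (- A * (1 - s))" by simp
    then have "u * (1 + s) \<le> - A * (1 - s)" using s(1) by (rule mult_left_le_imp_le)
    then have "A * (1 - s) / (1 + s) \<le> - u" using s by (simp add: field_simps)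
    then show ?thesis by (simp add: A_def s_def mult.commute mult.left_commute)
  qed
qed



definition pq :: "(real^'n \<Rightarrow> real^'n) \<Rightarrow> real^'n \<Rightarrow> real^'n^'n \<Rightarrow> real^'n \<Rightarrow> real" where
  "pq g x H d = g x \<bullet> d + 1/2 * (d \<bullet> (H *v d))"

lemma Q_cases:
  assumes hprop: "eproper \<psi>" and px: "\<psi> x = ereal px"
  shows "(\<psi> (x + d) = \<infinity> \<and> Qm g \<psi> x H d = \<infinity>) \<or>
         (\<exists>r. \<psi> (x + d) = ereal r \<and> Qm g \<psi> x H d = ereal (pq g x H d + r - px))"
proof -
  have "\<psi> (x + d) \<noteq> -\<infinity>" using hprop by (simp add: eproper_def)
  then show ?thesis
    by (cases "\<psi> (x + d)") (auto simp: Qm_def px pq_def)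
qed

lemma Q_zero:
  assumes px: "\<psi> x = ereal px"
  shows "Qm g \<psi> x H 0 = 0"
  by (simp add: Qm_def px)

lemma Q_sub:
  assumes hprop: "eproper \<psi>" and px: "\<psi> x = ereal px"
  shows "Qm g \<psi> x H d \<le> ereal c \<longleftrightarrow> \<psi> (x + d) \<le> ereal (c - pq g x H d + px)"
  using Q_cases[OF hprop px, of d g H] by auto

lemma pq_cont: "continuous_on UNIV (pq g x H)"
  unfolding pq_def by (intro continuous_intros)

lemma Q_closed:
  assumes hprop: "eproper \<psi>" and px: "\<psi> x = ereal px" and cl: "eclosed \<psi>"
  shows "closed {d. Qm g \<psi> x H d \<le> ereal c}"
proof -
  let ?E = "{(y, r::real). \<psi> y \<le> ereal r}"
  have "{d. Qm g \<psi> x H d \<le> ereal c} = (\<lambda>d. (x + d, c - pq g x H d + px)) -` ?E"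
    using Q_sub[OF hprop px] by auto
  moreover have "closed ((\<lambda>d. (x + d, c - pq g x H d + px)) -` ?E)"
  proof (rule continuous_closed_vimage)
    show "closed ?E" using cl by (simp add: eclosed_def)
    fix d
    have "continuous_on UNIV (\<lambda>d. (x + d, c - pq g x H d + px))"
      using pq_cont by (intro continuous_intros) auto
    then show "continuous (at d) (\<lambda>d. (x + d, c - pq g x H d + px))"
      by (simp add: continuous_on_eq_continuous_at)
  qed
  ultimately show ?thesis by simp
qed

lemma Q_strong0:
  assumes px: "\<psi> x = ereal px" and sc: "estrongly_convex \<sigma> (Qm g \<psi> x H)"
    and t: "0 < t" "t < 1"
  shows "Qm g \<psi> x H (t *\<^sub>R a) \<le> ereal t * Qm g \<psi> x H a - ereal (\<sigma> / 2 * t * (1 - t) * (norm a)\<^sup>2)"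
  using sc[unfolded estrongly_convex_def, rule_format, of t a 0] t by (simp add: Q_zero[of \<psi> x px, OF px])

lemma Q_ball_bdd:
  assumes hprop: "eproper \<psi>" and px: "\<psi> x = ereal px" and cl: "eclosed \<psi>"
  shows "\<exists>m. \<forall>d\<in>cball 0 1. ereal m \<le> Qm g \<psi> x H d"
proof (rule ccontr)
  let ?Q = "Qm g \<psi> x H"
  assume "\<not> ?thesis"
  then have "\<forall>n::nat. \<exists>d\<in>cball 0 1. ?Q d < ereal (- real n)" by (auto simp: not_le)
  then obtain dn where dn: "\<And>n. dn n \<in> cball 0 1" "\<And>n. ?Q (dn n) < ereal (- real n)" by metis
  obtain l r where l: "l \<in> cball 0 1" "strict_mono (r :: nat \<Rightarrow> nat)" "(dn \<circ> r) \<longlonglongrightarrow> l"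
    using seq_compactE[OF compact_imp_seq_compact[OF compact_cball], of dn] dn(1) by blast
  have "l \<in> {d. ?Q d \<le> ereal c}" for c
  proof (rule Lim_in_closed_set[OF Q_closed[OF hprop px cl, of g H c] _ _ l(3)])
    obtain N :: nat where N: "- c \<le> real N" using real_arch_simple by blast
    have "?Q (dn (r n)) \<le> ereal c" if "n \<ge> N" for n
    proof -
      have "real N \<le> real (r n)" using seq_suble[OF l(2), of n] that by simp
      then have "ereal (- real (r n)) \<le> ereal c" using N by simp
      then show ?thesis using dn(2)[of "r n"] by (meson less_imp_le order_trans)
    qed
    then show "\<forall>\<^sub>F n in sequentially. (dn \<circ> r) n \<in> {d. ?Q d \<le> ereal c}"
      by (auto simp: eventually_sequentially)
  qed simp
  then have "\<forall>c. ?Q l \<le> ereal c" by simp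
  then have "?Q l = -\<infinity>" by (metis MInfty_neq_ereal(1) ereal_bot) 
  then show False using Q_cases[OF hprop px, of l g H] by auto
qed

lemma bdd_real:
  fixes \<sigma> R m v :: real
  assumes \<sigma>: "\<sigma> > 0" and R: "R > 1"
    and h: "m \<le> (1 / R) * v - \<sigma> / 2 * (1 / R) * (1 - 1 / R) * R\<^sup>2"
  shows "- (m - \<sigma> / 2)\<^sup>2 / (2 * \<sigma>) \<le> v"
proof -
  have "R * m \<le> R * ((1 / R) * v - \<sigma> / 2 * (1 / R) * (1 - 1 / R) * R\<^sup>2)"
    using h R by simp
  also have "\<dots> = v - \<sigma> / 2 * (R\<^sup>2 - R)"
    using R by (simp add: field_simps power2_eq_square)
  finally have v: "R * m + \<sigma> / 2 * (R\<^sup>2 - R) \<le> v" by simp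
  have "0 \<le> (\<sigma> * R + (m - \<sigma> / 2))\<^sup>2 / (2 * \<sigma>)" using \<sigma> by simp
  also have "(\<sigma> * R + (m - \<sigma> / 2))\<^sup>2 / (2 * \<sigma>) = R * m + \<sigma> / 2 * (R\<^sup>2 - R) + (m - \<sigma> / 2)\<^sup>2 / (2 * \<sigma>)"
    using \<sigma> by (simp add: field_simps power2_eq_square)
  finally show ?thesis using v by (simp add: field_simps)
qed

lemma Q_bdd:
  assumes hprop: "eproper \<psi>" and px: "\<psi> x = ereal px" and cl: "eclosed \<psi>"
    and \<sigma>: "\<sigma> > 0" and sc: "estrongly_convex \<sigma> (Qm g \<psi> x H)"
  shows "\<exists>B. \<forall>d. ereal B \<le> Qm g \<psi> x H d"
proof -
  let ?Q = "Qm g \<psi> x H"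
  obtain m where m: "\<And>d. d \<in> cball 0 1 \<Longrightarrow> ereal m \<le> ?Q d"
    using Q_ball_bdd[OF hprop px cl, of g H] by blast
  define B0 where "B0 = - (m - \<sigma> / 2)\<^sup>2 / (2 * \<sigma>)"
  have "ereal (min m B0) \<le> ?Q d" for d
  proof (cases "norm d \<le> 1")
    case True
    then have "ereal m \<le> ?Q d" using m by simp
    then show ?thesis by (rule order_trans[rotated]) simp
  next
    case False
    define R where "R = norm d"
    have R: "R > 1" using False by (simp add: R_def)
    define t where "t = 1 / R"
    have t: "0 < t" "t < 1" using R by (auto simp: t_def)
    have "norm (t *\<^sub>R d) = 1" using R by (auto simp: t_def R_def)
    then have m1: "ereal m \<le> ?Q (t *\<^sub>R d)" using m by simp
    have s: "?Q (t *\<^sub>R d) \<le> ereal t * ?Q d - ereal (\<sigma> / 2 * t * (1 - t) * (norm d)\<^sup>2)"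
      by (rule Q_strong0[OF px sc t])
    show ?thesis
    proof (cases "?Q d = \<infinity>")
      case True then show ?thesis by simp
    next
      case False
      then obtain v where v: "?Q d = ereal v" using Q_cases[OF hprop px, of d g H] by auto
      have "ereal m \<le> ereal t * ?Q d - ereal (\<sigma> / 2 * t * (1 - t) * (norm d)\<^sup>2)"
        using order_trans[OF m1 s] .
      then have "m \<le> t * v - \<sigma> / 2 * t * (1 - t) * (norm d)\<^sup>2" using v by simp
      then have "B0 \<le> v" unfolding B0_def using bdd_real[OF \<sigma> R] by (simp add: t_def R_def)
      then have "min m B0 \<le> v" by simp
      then show ?thesis using v by (simp only: ereal_less_eq)
    qed
  qed
  then show ?thesis by blast
qed



lemma edom_fin:
  assumes "eproper \<psi>" "x \<in> edom \<psi>"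
  obtains px where "\<psi> x = ereal px"
  using assms by (cases "\<psi> x") (auto simp: eproper_def edom_def)

lemma part1:
  fixes f :: "real^'n \<Rightarrow> real" and g :: "real^'n \<Rightarrow> real^'n"
  assumes grad: "\<forall>x. GDERIV f x :> g x" and Llip: "L-lipschitz_on UNIV g"
    and hprop: "eproper \<psi>" and cl: "eclosed \<psi>" and \<gamma>: "0 < \<gamma>" "\<gamma> \<le> 1"
    and x: "x \<in> edom \<psi>" and sym: "symmetric_mat H" and \<sigma>: "\<sigma> > 0"
    and sc: "estrongly_convex \<sigma> (Qm g \<psi> x H)" and \<eta>: "0 \<le> \<eta>" "\<eta> < 1"
    and inex: "inexact \<eta> (Qm g \<psi> x H) d"
    and cond: "(1 - \<gamma>) * ((1 - sqrt \<eta>) / (1 + sqrt \<eta>)) * \<sigma> + lambda_min H \<ge> L"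
  shows "suff_dec f \<psi> (Qm g \<psi> x H) \<gamma> x d"
proof -
  let ?Q = "Qm g \<psi> x H"
  obtain px where px: "\<psi> x = ereal px" using edom_fin[OF hprop x] by blast
  obtain B where B: "\<And>e. ereal B \<le> ?Q e" using Q_bdd[OF hprop px cl \<sigma> sc] by blast
  have Q0: "?Q 0 = 0" by (rule Q_zero[of \<psi> x px, OF px])
  define I where "I = (INF e. ?Q e)"
  have IB: "ereal B \<le> I" unfolding I_def by (rule INF_greatest) (rule B)
  have I0: "I \<le> 0" unfolding I_def using INF_lower[of 0 UNIV ?Q] Q0 by simp
  obtain q where q: "I = ereal q" using IB I0 by (cases I) auto
  have q0: "q \<le> 0" using I0 q by simp
  have qle: "ereal q \<le> ?Q e" for e using q INF_lower[of e UNIV ?Q] by (simp add: I_def)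
  have inex': "?Q d - ereal q \<le> ereal \<eta> * (0 - ereal q)"
    using inex unfolding inexact_def I_def[symmetric] q Q0 .
  have "?Q d \<noteq> \<infinity>"
  proof
    assume "?Q d = \<infinity>"
    then show False using inex' by simp
  qed
  then obtain r where r: "\<psi> (x + d) = ereal r" and Qd: "?Q d = ereal (pq g x H d + r - px)"
    using Q_cases[OF hprop px, of d g H] by auto
  define u where "u = pq g x H d + r - px"
  have Qu: "?Q d = ereal u" using Qd by (simp add: u_def)
  have u_le: "u \<le> (1 - \<eta>) * q" using inex' Qu by (simp add: algebra_simps)
  have scr: "q \<le> t * u - \<sigma> / 2 * t * (1 - t) * (norm d)\<^sup>2" if t: "0 < t" "t < 1" for t
  proof -
    have "ereal q \<le> ereal t * ?Q d - ereal (\<sigma> / 2 * t * (1 - t) * (norm d)\<^sup>2)"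
      using order_trans[OF qle Q_strong0[OF px sc t]] .
    then show ?thesis using Qu by simp
  qed
  have key: "\<sigma> / 2 * ((1 - sqrt \<eta>) / (1 + sqrt \<eta>)) * (norm d)\<^sup>2 \<le> - u"
    by (rule key_real[OF \<sigma> \<eta> q0 u_le _ scr]) simp_all
  have desc: "f (x + d) \<le> f x + g x \<bullet> d + L / 2 * (norm d)\<^sup>2" by (rule descent[OF grad Llip])
  have ray: "lambda_min H * (norm d)\<^sup>2 \<le> d \<bullet> (H *v d)" by (rule lmin_ray[OF sym])
  define \<kappa> where "\<kappa> = (1 - sqrt \<eta>) / (1 + sqrt \<eta>)"
  define n2 where "n2 = (norm d)\<^sup>2"
  have n2: "0 \<le> n2" by (simp add: n2_def)
  have c1: "L - lambda_min H \<le> (1 - \<gamma>) * \<kappa> * \<sigma>" using cond by (simp add: \<kappa>_def)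
  have c2: "(L - lambda_min H) * n2 \<le> ((1 - \<gamma>) * \<kappa> * \<sigma>) * n2" by (rule mult_right_mono[OF c1 n2])
  have k2: "\<sigma> / 2 * \<kappa> * n2 \<le> - u" using key by (simp add: \<kappa>_def n2_def)
  have k3: "(1 - \<gamma>) * (\<sigma> / 2 * \<kappa> * n2) \<le> (1 - \<gamma>) * (- u)"
    by (rule mult_left_mono[OF k2]) (use \<gamma> in simp)
  have u0: "u \<le> 0"
  proof -
    have "(1 - \<eta>) * q \<le> 0" using q0 \<eta> by (simp add: mult_nonneg_nonpos)
    then show ?thesis using u_le by simp
  qed
  have main: "f x + px - (f (x + d) + r) \<ge> - (\<gamma> * u)"
  proof -
    have uexp: "u = g x \<bullet> d + 1/2 * (d \<bullet> (H *v d)) + r - px" by (simp add: u_def pq_def)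
    have "f x + px - (f (x + d) + r) \<ge> - u + 1/2 * (lambda_min H * n2) - L / 2 * n2"
      using desc ray uexp by (simp add: n2_def)
    moreover have "- u + 1/2 * (lambda_min H * n2) - L / 2 * n2 \<ge> - (\<gamma> * u)"
    proof -
      have "1/2 * ((L - lambda_min H) * n2) \<le> (1 - \<gamma>) * (\<sigma> / 2 * \<kappa> * n2)"
        using c2 by (simp add: algebra_simps)
      then have "1/2 * ((L - lambda_min H) * n2) \<le> (1 - \<gamma>) * (- u)" using k3 by linarith
      then show ?thesis by (simp add: algebra_simps)
    qed
    ultimately show ?thesis by linarith
  qed
  have gu: "0 \<le> - (\<gamma> * u)" using \<gamma> u0 by (simp add: mult_nonneg_nonpos)
  show ?thesis
    unfolding suff_dec_def Fobj_def px r Qu using main gu by simp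
qed



lemma quad_expand:
  fixes H :: "real^'n^'n"
  assumes sym: "symmetric_mat H"
  shows "t * (a \<bullet> (H *v a)) + (1 - t) * (b \<bullet> (H *v b))
         - (t *\<^sub>R a + (1 - t) *\<^sub>R b) \<bullet> (H *v (t *\<^sub>R a + (1 - t) *\<^sub>R b))
         = t * (1 - t) * ((a - b) \<bullet> (H *v (a - b)))"
proof -
  have ab: "b \<bullet> (H *v a) = a \<bullet> (H *v b)" using sym_inner[OF sym, of b a] by (simp add: inner_commute)
  have e1: "(t *\<^sub>R a + (1 - t) *\<^sub>R b) \<bullet> (H *v (t *\<^sub>R a + (1 - t) *\<^sub>R b))
     = t * t * (a \<bullet> (H *v a)) + t * (1 - t) * (a \<bullet> (H *v b)) + (1 - t) * t * (b \<bullet> (H *v a))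
       + (1 - t) * (1 - t) * (b \<bullet> (H *v b))"
    by (simp add: matrix_vector_right_distrib matrix_vector_mult_scaleR inner_add_left inner_add_right algebra_simps)
  have e2: "(a - b) \<bullet> (H *v (a - b)) = a \<bullet> (H *v a) - a \<bullet> (H *v b) - b \<bullet> (H *v a) + b \<bullet> (H *v b)"
    by (simp add: matrix_vector_mult_diff_distrib inner_diff_left inner_diff_right)
  show ?thesis unfolding e1 e2 ab by (simp add: algebra_simps)
qed

lemma Q_strong:
  fixes H :: "real^'n^'n"
  assumes cvx: "econvex \<psi>" and hprop: "eproper \<psi>" and px: "\<psi> x = ereal px"
    and sym: "symmetric_mat H" and \<mu>: "\<mu> > 0" and ray: "\<And>w. \<mu> * (norm w)\<^sup>2 \<le> w \<bullet> (H *v w)"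
  shows "estrongly_convex \<mu> (Qm g \<psi> x H)"
  unfolding estrongly_convex_def
proof (intro allI impI)
  fix a b :: "real^'n" and t :: real
  assume t: "0 < t \<and> t < 1"
  let ?Q = "Qm g \<psi> x H"
  let ?c = "t *\<^sub>R a + (1 - t) *\<^sub>R b"
  show "?Q ?c \<le> ereal t * ?Q a + ereal (1 - t) * ?Q b - ereal (\<mu> / 2 * t * (1 - t) * (norm (a - b))\<^sup>2)"
  proof (cases "?Q a = \<infinity> \<or> ?Q b = \<infinity>")
    case True
    have na: "?Q a \<noteq> -\<infinity>" "?Q b \<noteq> -\<infinity>" using Q_cases[OF hprop px, of a g H] Q_cases[OF hprop px, of b g H] by auto
    have s: "ereal t * ?Q a + ereal (1 - t) * ?Q b = \<infinity>"
      using True t na by (auto simp: ereal_mult_infty)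
    show ?thesis unfolding s by simp
  next
    case False
    then obtain ra rb where ra: "\<psi> (x + a) = ereal ra" "?Q a = ereal (pq g x H a + ra - px)"
      and rb: "\<psi> (x + b) = ereal rb" "?Q b = ereal (pq g x H b + rb - px)"
      using Q_cases[OF hprop px, of a g H] Q_cases[OF hprop px, of b g H] by auto
    let ?E = "{(y, r::real). \<psi> y \<le> ereal r}"
    have cE: "convex ?E" using cvx by (simp add: econvex_def)
    have m1: "(x + a, ra) \<in> ?E" and m2: "(x + b, rb) \<in> ?E" using ra rb by auto
    have t0: "0 \<le> t" "0 \<le> 1 - t" "t + (1 - t) = 1" using t by auto
    have "t *\<^sub>R (x + a, ra) + (1 - t) *\<^sub>R (x + b, rb) \<in> ?E"
      by (rule convexD[OF cE m1 m2 t0])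
    moreover have "t *\<^sub>R (x + a, ra) + (1 - t) *\<^sub>R (x + b, rb) = (x + ?c, t * ra + (1 - t) * rb)"
      by (simp add: algebra_simps)
    ultimately have cv: "\<psi> (x + ?c) \<le> ereal (t * ra + (1 - t) * rb)" by simp
    have qe: "t * (a \<bullet> (H *v a)) + (1 - t) * (b \<bullet> (H *v b)) - ?c \<bullet> (H *v ?c)
         = t * (1 - t) * ((a - b) \<bullet> (H *v (a - b)))" by (rule quad_expand[OF sym])
    have "\<mu> * (norm (a - b))\<^sup>2 \<le> (a - b) \<bullet> (H *v (a - b))" by (rule ray)
    then have "t * (1 - t) * (\<mu> * (norm (a - b))\<^sup>2) \<le> t * (1 - t) * ((a - b) \<bullet> (H *v (a - b)))"
      using t by (intro mult_left_mono) auto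
    then have pqi: "pq g x H ?c \<le> t * pq g x H a + (1 - t) * pq g x H b - \<mu> / 2 * t * (1 - t) * (norm (a - b))\<^sup>2"
    proof -
      have lin: "g x \<bullet> ?c = t * (g x \<bullet> a) + (1 - t) * (g x \<bullet> b)" by (simp add: inner_add_right)
      have e1: "t * pq g x H a + (1 - t) * pq g x H b = t * (g x \<bullet> a) + (1 - t) * (g x \<bullet> b)
         + 1/2 * (t * (a \<bullet> (H *v a)) + (1 - t) * (b \<bullet> (H *v b)))" by (simp add: pq_def field_simps)
      have e2: "pq g x H ?c = g x \<bullet> ?c + 1/2 * (?c \<bullet> (H *v ?c))" by (simp add: pq_def)
      have e3: "\<mu> / 2 * t * (1 - t) * (norm (a - b))\<^sup>2 = 1/2 * (t * (1 - t) * (\<mu> * (norm (a - b))\<^sup>2))" by simp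
      have gen: "\<And>A1 A2 A3 A4 G::real. A2 - A1 = A4 \<Longrightarrow> A3 \<le> A4 \<Longrightarrow> G + 1/2 * A1 \<le> G + 1/2 * A2 - 1/2 * A3"
        by linarith
      show ?thesis unfolding e1 e2 e3 lin
        by (rule gen[OF qe \<open>t * (1 - t) * (\<mu> * (norm (a - b))\<^sup>2) \<le> _\<close>])
    qed
    have "?Q ?c \<le> ereal (t * (pq g x H a + ra - px) + (1 - t) * (pq g x H b + rb - px) - \<mu> / 2 * t * (1 - t) * (norm (a - b))\<^sup>2)"
      unfolding Q_sub[OF hprop px]
    proof (rule order_trans[OF cv], unfold ereal_less_eq)
      let ?M = "\<mu> / 2 * t * (1 - t) * (norm (a - b))\<^sup>2"
      have id: "t * (pq g x H a + ra - px) + (1 - t) * (pq g x H b + rb - px) - ?M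
          = (t * pq g x H a + (1 - t) * pq g x H b - ?M) + (t * ra + (1 - t) * rb) - px"
        by (simp add: algebra_simps)
      show "t * ra + (1 - t) * rb \<le> t * (pq g x H a + ra - px) + (1 - t) * (pq g x H b + rb - px) - ?M
          - pq g x H ?c + px"
        unfolding id using pqi by linarith
    qed
    then show ?thesis using ra rb by simp
  qed
qed



lemma T_pos:
  assumes L: "L > 0" and \<gamma>: "0 < \<gamma>" "\<gamma> \<le> 1" and \<eta>: "0 \<le> \<eta>" "\<eta> < 1"
  shows "2 - \<gamma> * (1 - sqrt \<eta>) > 0" "L * (1 + sqrt \<eta>) / (2 - \<gamma> * (1 - sqrt \<eta>)) > 0"
proof -
  have s: "0 \<le> sqrt \<eta>" "sqrt \<eta> < 1" using \<eta> by auto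
  have "\<gamma> * (1 - sqrt \<eta>) \<le> 1 * 1" using \<gamma> s by (intro mult_mono) auto
  then show d: "2 - \<gamma> * (1 - sqrt \<eta>) > 0" by simp
  have "1 + sqrt \<eta> > 0" using s(1) by linarith
  then have "L * (1 + sqrt \<eta>) > 0" using L by simp
  then show "L * (1 + sqrt \<eta>) / (2 - \<gamma> * (1 - sqrt \<eta>)) > 0" using d by (rule divide_pos_pos)
qed

lemma reject:
  fixes f :: "real^'n \<Rightarrow> real" and g :: "real^'n \<Rightarrow> real^'n"
  assumes grad: "\<forall>x. GDERIV f x :> g x" and Llip: "L-lipschitz_on UNIV g" and L: "L > 0"
    and cvx: "econvex \<psi>" and hprop: "eproper \<psi>" and cl: "eclosed \<psi>" and \<gamma>: "0 < \<gamma>" "\<gamma> \<le> 1"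
    and x: "x \<in> edom \<psi>" and sym: "symmetric_mat H" and \<eta>: "0 \<le> \<eta>" "\<eta> < 1"
    and inex: "inexact \<eta> (Qm g \<psi> x H) d"
    and rej: "\<not> suff_dec f \<psi> (Qm g \<psi> x H) \<gamma> x d"
  shows "lambda_min H < L * (1 + sqrt \<eta>) / (2 - \<gamma> * (1 - sqrt \<eta>))"
proof (rule ccontr)
  define T where "T = L * (1 + sqrt \<eta>) / (2 - \<gamma> * (1 - sqrt \<eta>))"
  assume "\<not> lambda_min H < L * (1 + sqrt \<eta>) / (2 - \<gamma> * (1 - sqrt \<eta>))"
  then have lT: "T \<le> lambda_min H" by (simp add: T_def)
  have dpos: "2 - \<gamma> * (1 - sqrt \<eta>) > 0" and Tpos: "T > 0" using T_pos[OF L \<gamma> \<eta>] by (auto simp: T_def)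
  have lpos: "lambda_min H > 0" using lT Tpos by simp
  obtain px where px: "\<psi> x = ereal px" using edom_fin[OF hprop x] by blast
  have sc: "estrongly_convex (lambda_min H) (Qm g \<psi> x H)"
    by (rule Q_strong[OF cvx hprop px sym lpos lmin_ray[OF sym]])
  have s: "0 \<le> sqrt \<eta>" using \<eta> by simp
  have sp: "1 + sqrt \<eta> \<noteq> 0" using s by linarith
  define c where "c = (1 - \<gamma>) * ((1 - sqrt \<eta>) / (1 + sqrt \<eta>)) + 1"
  have c: "c = (2 - \<gamma> * (1 - sqrt \<eta>)) / (1 + sqrt \<eta>)"
    using sp by (simp add: c_def field_simps)
  have "1 + sqrt \<eta> > 0" using s by linarith
  then have cpos: "c > 0" unfolding c using dpos by (intro divide_pos_pos)
  have "c * T = L" using dpos sp by (simp add: c T_def)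
  moreover have "c * T \<le> c * lambda_min H" using lT cpos by simp
  ultimately have "(1 - \<gamma>) * ((1 - sqrt \<eta>) / (1 + sqrt \<eta>)) * lambda_min H + lambda_min H \<ge> L"
    by (simp add: c_def algebra_simps)
  then have "suff_dec f \<psi> (Qm g \<psi> x H) \<gamma> x d"
    by (rule part1[OF grad Llip hprop cl \<gamma> x sym lpos sc \<eta> inex])
  then show False using rej by simp
qed

lemma edom_step:
  assumes hprop: "eproper \<psi>" and x: "x \<in> edom \<psi>" and sd: "suff_dec f \<psi> Q \<gamma> x d"
  shows "x + d \<in> edom \<psi>"
proof (rule ccontr)
  assume "x + d \<notin> edom \<psi>"
  then have inf: "\<psi> (x + d) = \<infinity>" by (simp add: edom_def)
  obtain px where px: "\<psi> x = ereal px" using edom_fin[OF hprop x] by blast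
  have "Fobj f \<psi> x - Fobj f \<psi> (x + d) = -\<infinity>" by (simp add: Fobj_def px inf)
  with sd have "- (ereal \<gamma> * Q d) = -\<infinity>" unfolding suff_dec_def by simp
  with sd show False unfolding suff_dec_def by simp
qed

lemma loew_lo:
  fixes H :: "real^'n^'n"
  assumes "loewner_le (m *\<^sub>R mat 1) H"
  shows "m * (norm w)\<^sup>2 \<le> w \<bullet> (H *v w)"
  using assms[unfolded loewner_le_def, rule_format, of w]
  by (simp add: scaleR_matrix_vector_assoc[symmetric] power2_norm_eq_inner)

lemma loew_hi:
  fixes H :: "real^'n^'n"
  assumes "loewner_le H (m *\<^sub>R mat 1)"
  shows "w \<bullet> (H *v w) \<le> m * (norm w)\<^sup>2"
  using assms[unfolded loewner_le_def, rule_format, of w]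
  by (simp add: scaleR_matrix_vector_assoc[symmetric] power2_norm_eq_inner)

lemma quad_shift:
  fixes H :: "real^'n^'n"
  shows "w \<bullet> ((H + c *\<^sub>R mat 1) *v w) = w \<bullet> (H *v w) + c * (norm w)\<^sup>2"
  by (simp add: matrix_vector_mult_add_rdistrib scaleR_matrix_vector_assoc[symmetric] inner_add_right power2_norm_eq_inner)

lemma quad_scale:
  fixes H :: "real^'n^'n"
  shows "w \<bullet> ((c *\<^sub>R H) *v w) = c * (w \<bullet> (H *v w))"
  by (simp add: scaleR_matrix_vector_assoc[symmetric])

lemma transpose_plus: "transpose (A + B) = transpose A + (transpose B :: 'a::semiring_1^'n^'m)"
  by (simp add: transpose_def vec_eq_iff)

lemma sym_shift: "symmetric_mat H \<Longrightarrow> symmetric_mat (H + c *\<^sub>R mat 1)"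
  by (simp add: symmetric_mat_def transpose_plus transpose_scalar transpose_mat)

lemma sym_scale: "symmetric_mat H \<Longrightarrow> symmetric_mat (c *\<^sub>R H)"
  by (simp add: symmetric_mat_def transpose_scalar)

lemma spec_bound:
  fixes H :: "real^'n^'n"
  assumes sym: "symmetric_mat H" and lo: "\<And>w. a * (norm w)\<^sup>2 \<le> w \<bullet> (H *v w)"
    and hi: "\<And>w. w \<bullet> (H *v w) \<le> b * (norm w)\<^sup>2"
  shows "spec_norm H \<le> max \<bar>a\<bar> \<bar>b\<bar>"
proof (rule spec_norm_le[OF sym])
  fix w :: "real^'n"
  have n: "0 \<le> (norm w)\<^sup>2" by simp
  have "a * (norm w)\<^sup>2 \<ge> - (max \<bar>a\<bar> \<bar>b\<bar> * (norm w)\<^sup>2)"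
    using mult_right_mono[of "- a" "max \<bar>a\<bar> \<bar>b\<bar>", OF _ n] by linarith
  moreover have "b * (norm w)\<^sup>2 \<le> max \<bar>a\<bar> \<bar>b\<bar> * (norm w)\<^sup>2"
    using mult_right_mono[of b "max \<bar>a\<bar> \<bar>b\<bar>", OF _ n] by linarith
  ultimately show "\<bar>w \<bullet> (H *v w)\<bar> \<le> max \<bar>a\<bar> \<bar>b\<bar> * (norm w)\<^sup>2"
    using lo[of w] hi[of w] by linarith
qed



lemma real2:
  fixes M0 m0 T \<beta> c :: real
  assumes "M0 > 0" "m0 \<le> M0" "T > 0" "0 < \<beta>" "\<beta> < 1" "0 \<le> c" "c \<le> max 1 ((1 / \<beta>) * (T - m0))"
  shows "max \<bar>m0 + c\<bar> \<bar>M0 + c\<bar> \<le> M0 + max 1 ((1 / \<beta>) * (T - m0))"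
proof -
  let ?X = "max 1 ((1 / \<beta>) * (T - m0))"
  have a: "\<bar>M0 + c\<bar> \<le> M0 + ?X" using assms by simp
  have b: "\<bar>m0 + c\<bar> \<le> M0 + ?X"
  proof (cases "m0 + c \<ge> 0")
    case True then show ?thesis using assms by simp
  next
    case False
    then have m0: "m0 < 0" using assms by simp
    have "(1 / \<beta>) * (T - m0) - (- m0) = (T - (1 - \<beta>) * m0) / \<beta>"
      using assms by (simp add: field_simps)
    also have "\<dots> > 0"
    proof -
      have "(1 - \<beta>) * m0 \<le> 0" using assms m0 by (intro mult_nonneg_nonpos) auto
      then show ?thesis using assms by (intro divide_pos_pos) auto
    qed
    finally have "- m0 \<le> (1 / \<beta>) * (T - m0)" by simp
    then show ?thesis using False assms by simp
  qed
  show ?thesis using a b by simp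
qed

lemma real1:
  fixes M0 m0 s X :: real
  assumes "M0 > 0" "m0 > 0" "m0 \<le> M0" "0 < s" "s \<le> max 1 X"
  shows "max \<bar>s * m0\<bar> \<bar>s * M0\<bar> \<le> M0 * max 1 X"
proof -
  have "s * m0 \<le> s * M0" using assms by simp
  moreover have "s * M0 \<le> max 1 X * M0" using assms by (intro mult_right_mono) auto
  ultimately show ?thesis using assms by (simp add: abs_of_pos mult.commute)
qed



theorem lemma4:
  fixes f :: "real^'n \<Rightarrow> real" and g :: "real^'n \<Rightarrow> real^'n"
    and \<psi> :: "real^'n \<Rightarrow> ereal" and L \<gamma> :: real
  assumes grad: "\<forall>x. GDERIV f x :> g x"
    and Lpos: "L > 0"
    and Llip: "L-lipschitz_on UNIV g"
    and psi_convex: "econvex \<psi>" and psi_proper: "eproper \<psi>" and psi_closed: "eclosed \<psi>"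
    and F_bdd: "\<exists>B. \<forall>x. ereal B \<le> Fobj f \<psi> x"
    and Omega_ne: "\<exists>x. Fobj f \<psi> x = (INF y. Fobj f \<psi> y)"
    and gamma: "0 < \<gamma>" "\<gamma> \<le> 1"
  shows
    "(\<forall>x H \<sigma> \<eta> d.
        x \<in> edom \<psi> \<and> symmetric_mat H \<and> \<sigma> > 0 \<and> estrongly_convex \<sigma> (Qm g \<psi> x H)
        \<and> 0 \<le> \<eta> \<and> \<eta> < 1 \<and> inexact \<eta> (Qm g \<psi> x H) d
        \<and> (1 - \<gamma>) * ((1 - sqrt \<eta>) / (1 + sqrt \<eta>)) * \<sigma> + lambda_min H \<ge> L
        \<longrightarrow> suff_dec f \<psi> (Qm g \<psi> x H) \<gamma> x d)
     \<and> (\<forall>\<beta> \<eta> x H0 J D m0 M0.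
          0 < \<beta> \<and> \<beta> < 1 \<and> 0 \<le> \<eta> \<and> \<eta> < 1 \<and> x 0 \<in> edom \<psi>
          \<and> M0 > 0 \<and> m0 \<le> M0
          \<and> (\<forall>k. loewner_le (m0 *\<^sub>R mat 1) (H0 k) \<and> loewner_le (H0 k) (M0 *\<^sub>R mat 1))
          \<and> alg2_run (cand2 \<beta>) f g \<psi> \<gamma> \<eta> x H0 J D
          \<longrightarrow> (\<forall>k. spec_norm (cand2 \<beta> (H0 k) (J k)) \<le> M2tilde L \<beta> \<gamma> m0 M0 \<eta>))
     \<and> (\<forall>\<beta> \<eta> x H0 J D m0 M0.
          0 < \<beta> \<and> \<beta> < 1 \<and> 0 \<le> \<eta> \<and> \<eta> < 1 \<and> x 0 \<in> edom \<psi>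
          \<and> M0 > 0 \<and> 0 < m0 \<and> m0 \<le> M0
          \<and> (\<forall>k. loewner_le (m0 *\<^sub>R mat 1) (H0 k) \<and> loewner_le (H0 k) (M0 *\<^sub>R mat 1))
          \<and> alg2_run (cand1 \<beta>) f g \<psi> \<gamma> \<eta> x H0 J D
          \<longrightarrow> (\<forall>k. spec_norm (cand1 \<beta> (H0 k) (J k)) \<le> M1tilde L \<beta> \<gamma> m0 M0 \<eta>))"
proof -
  have P1: "\<forall>x H \<sigma> \<eta> d.
        x \<in> edom \<psi> \<and> symmetric_mat H \<and> \<sigma> > 0 \<and> estrongly_convex \<sigma> (Qm g \<psi> x H)
        \<and> 0 \<le> \<eta> \<and> \<eta> < 1 \<and> inexact \<eta> (Qm g \<psi> x H) d
        \<and> (1 - \<gamma>) * ((1 - sqrt \<eta>) / (1 + sqrt \<eta>)) * \<sigma> + lambda_min H \<ge> L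
        \<longrightarrow> suff_dec f \<psi> (Qm g \<psi> x H) \<gamma> x d"
    using part1[OF grad Llip psi_proper psi_closed gamma] by blast
  have edomall: "x k \<in> edom \<psi>"
    if "x 0 \<in> edom \<psi>" and run: "alg2_run cand f g \<psi> \<gamma> \<eta> x H0 J D" for cand x H0 J D \<eta> k
  proof (induction k)
    case 0 then show ?case using that by simp
  next
    case (Suc k)
    have "suff_dec f \<psi> (Qm g \<psi> (x k) (cand (H0 k) (J k))) \<gamma> (x k) (D k (J k))"
      using run by (simp add: alg2_run_def)
    from edom_step[OF psi_proper Suc this] show ?case using run by (simp add: alg2_run_def)
  qed
  have P2: "\<forall>\<beta> \<eta> x H0 J D m0 M0.
          0 < \<beta> \<and> \<beta> < 1 \<and> 0 \<le> \<eta> \<and> \<eta> < 1 \<and> x 0 \<in> edom \<psi>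
          \<and> M0 > 0 \<and> m0 \<le> M0
          \<and> (\<forall>k. loewner_le (m0 *\<^sub>R mat 1) (H0 k) \<and> loewner_le (H0 k) (M0 *\<^sub>R mat 1))
          \<and> alg2_run (cand2 \<beta>) f g \<psi> \<gamma> \<eta> x H0 J D
          \<longrightarrow> (\<forall>k. spec_norm (cand2 \<beta> (H0 k) (J k)) \<le> M2tilde L \<beta> \<gamma> m0 M0 \<eta>)"
  proof (intro allI impI)
    fix \<beta> \<eta> x H0 J D m0 M0 k
    assume A: "0 < \<beta> \<and> \<beta> < 1 \<and> 0 \<le> \<eta> \<and> \<eta> < 1 \<and> x 0 \<in> edom \<psi>
          \<and> M0 > 0 \<and> m0 \<le> M0
          \<and> (\<forall>k. loewner_le (m0 *\<^sub>R mat 1) (H0 k) \<and> loewner_le (H0 k) (M0 *\<^sub>R mat 1))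
          \<and> alg2_run (cand2 \<beta>) f g \<psi> \<gamma> \<eta> x H0 J D"
    then have \<beta>: "0 < \<beta>" "\<beta> < 1" and \<eta>: "0 \<le> \<eta>" "\<eta> < 1" and x0: "x 0 \<in> edom \<psi>"
      and M0: "M0 > 0" "m0 \<le> M0" and lw: "\<And>k. loewner_le (m0 *\<^sub>R mat 1) (H0 k)"
      and hw: "\<And>k. loewner_le (H0 k) (M0 *\<^sub>R mat 1)"
      and run: "alg2_run (cand2 \<beta>) f g \<psi> \<gamma> \<eta> x H0 J D" by auto
    define T where "T = L * (1 + sqrt \<eta>) / (2 - \<gamma> * (1 - sqrt \<eta>))"
    have Tpos: "T > 0" using T_pos[OF Lpos gamma \<eta>] by (simp add: T_def)
    have M2: "M2tilde L \<beta> \<gamma> m0 M0 \<eta> = M0 + max 1 ((1 / \<beta>) * (T - m0))"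
      by (simp add: M2tilde_def T_def)
    have symH0: "symmetric_mat (H0 k)" using run by (simp add: alg2_run_def)
    have xk: "x k \<in> edom \<psi>" by (rule edomall[OF x0 run])
    have shiftb: "spec_norm (H0 k + c *\<^sub>R mat 1) \<le> max \<bar>m0 + c\<bar> \<bar>M0 + c\<bar>" for c
    proof (rule spec_bound[OF sym_shift[OF symH0]])
      fix w :: "real^'n"
      show "(m0 + c) * (norm w)\<^sup>2 \<le> w \<bullet> ((H0 k + c *\<^sub>R mat 1) *v w)"
        using loew_lo[OF lw[of k], of w] unfolding quad_shift by (simp add: algebra_simps)
      show "w \<bullet> ((H0 k + c *\<^sub>R mat 1) *v w) \<le> (M0 + c) * (norm w)\<^sup>2"
        using loew_hi[OF hw[of k], of w] unfolding quad_shift by (simp add: algebra_simps)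
    qed
    have "\<exists>c. cand2 \<beta> (H0 k) (J k) = H0 k + c *\<^sub>R mat 1 \<and> 0 \<le> c \<and> c \<le> max 1 ((1 / \<beta>) * (T - m0))"
    proof (cases "J k")
      case 0
      then show ?thesis by (intro exI[of _ 0]) (simp add: cand2_def)
    next
      case (Suc j)
      show ?thesis
      proof (cases j)
        case 0
        then show ?thesis using Suc by (intro exI[of _ 1]) (simp add: cand2_def)
      next
        case (Suc i)
        have Ji: "J k = Suc (Suc i)" using Suc \<open>J k = Suc j\<close> by simp
        define H' where "H' = H0 k + (1 / \<beta> ^ i) *\<^sub>R mat 1"
        have H': "cand2 \<beta> (H0 k) (Suc i) = H'" by (simp add: cand2_def H'_def)
        have inex: "inexact \<eta> (Qm g \<psi> (x k) H') (D k (Suc i))"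
          using run Ji H' unfolding alg2_run_def by (metis le_SucI order_refl)
        have rej: "\<not> suff_dec f \<psi> (Qm g \<psi> (x k) H') \<gamma> (x k) (D k (Suc i))"
          using run Ji H' unfolding alg2_run_def by (metis lessI)
        have symH': "symmetric_mat H'" unfolding H'_def by (rule sym_shift[OF symH0])
        have lt: "lambda_min H' < T"
          using reject[OF grad Llip Lpos psi_convex psi_proper psi_closed gamma xk symH' \<eta> inex rej]
          by (simp add: T_def)
        have ge: "m0 + 1 / \<beta> ^ i \<le> lambda_min H'"
        proof (rule lmin_ge[OF symH'])
          fix w :: "real^'n"
          show "(m0 + 1 / \<beta> ^ i) * (norm w)\<^sup>2 \<le> w \<bullet> (H' *v w)"
            using loew_lo[OF lw[of k], of w] unfolding H'_def quad_shift by (simp add: algebra_simps)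
        qed
        have "1 / \<beta> ^ i < T - m0" using lt ge by simp
        then have "(1 / \<beta> ^ i) / \<beta> \<le> (T - m0) / \<beta>" using \<beta> by (intro divide_right_mono) auto
        moreover have "(1 / \<beta> ^ i) / \<beta> = 1 / \<beta> ^ Suc i" by simp
        ultimately have "1 / \<beta> ^ Suc i \<le> (T - m0) / \<beta>" by metis
        then have "1 / \<beta> ^ Suc i \<le> (1 / \<beta>) * (T - m0)" by simp
        then show ?thesis using Ji \<beta>
          by (intro exI[of _ "1 / \<beta> ^ Suc i"]) (simp add: cand2_def)
      qed
    qed
    then obtain c where c: "cand2 \<beta> (H0 k) (J k) = H0 k + c *\<^sub>R mat 1" "0 \<le> c"
        "c \<le> max 1 ((1 / \<beta>) * (T - m0))" by blast
    have "spec_norm (cand2 \<beta> (H0 k) (J k)) \<le> max \<bar>m0 + c\<bar> \<bar>M0 + c\<bar>" using c(1) shiftb by simp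
    also have "\<dots> \<le> M0 + max 1 ((1 / \<beta>) * (T - m0))" by (rule real2[OF M0 Tpos \<beta> c(2,3)])
    finally show "spec_norm (cand2 \<beta> (H0 k) (J k)) \<le> M2tilde L \<beta> \<gamma> m0 M0 \<eta>" using M2 by simp
  qed
  have P3: "\<forall>\<beta> \<eta> x H0 J D m0 M0.
          0 < \<beta> \<and> \<beta> < 1 \<and> 0 \<le> \<eta> \<and> \<eta> < 1 \<and> x 0 \<in> edom \<psi>
          \<and> M0 > 0 \<and> 0 < m0 \<and> m0 \<le> M0
          \<and> (\<forall>k. loewner_le (m0 *\<^sub>R mat 1) (H0 k) \<and> loewner_le (H0 k) (M0 *\<^sub>R mat 1))
          \<and> alg2_run (cand1 \<beta>) f g \<psi> \<gamma> \<eta> x H0 J D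
          \<longrightarrow> (\<forall>k. spec_norm (cand1 \<beta> (H0 k) (J k)) \<le> M1tilde L \<beta> \<gamma> m0 M0 \<eta>)"
  proof (intro allI impI)
    fix \<beta> \<eta> x H0 J D m0 M0 k
    assume A: "0 < \<beta> \<and> \<beta> < 1 \<and> 0 \<le> \<eta> \<and> \<eta> < 1 \<and> x 0 \<in> edom \<psi>
          \<and> M0 > 0 \<and> 0 < m0 \<and> m0 \<le> M0
          \<and> (\<forall>k. loewner_le (m0 *\<^sub>R mat 1) (H0 k) \<and> loewner_le (H0 k) (M0 *\<^sub>R mat 1))
          \<and> alg2_run (cand1 \<beta>) f g \<psi> \<gamma> \<eta> x H0 J D"
    then have \<beta>: "0 < \<beta>" "\<beta> < 1" and \<eta>: "0 \<le> \<eta>" "\<eta> < 1" and x0: "x 0 \<in> edom \<psi>"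
      and M0: "M0 > 0" "m0 > 0" "m0 \<le> M0" and lw: "\<And>k. loewner_le (m0 *\<^sub>R mat 1) (H0 k)"
      and hw: "\<And>k. loewner_le (H0 k) (M0 *\<^sub>R mat 1)"
      and run: "alg2_run (cand1 \<beta>) f g \<psi> \<gamma> \<eta> x H0 J D" by auto
    define T where "T = L * (1 + sqrt \<eta>) / (2 - \<gamma> * (1 - sqrt \<eta>))"
    define X where "X = L * (1 + sqrt \<eta>) / (\<beta> * (2 - \<gamma> * (1 - sqrt \<eta>)) * m0)"
    have Tpos: "T > 0" using T_pos[OF Lpos gamma \<eta>] by (simp add: T_def)
    have XT: "X = T / (\<beta> * m0)" by (simp add: X_def T_def field_simps)
    have M1: "M1tilde L \<beta> \<gamma> m0 M0 \<eta> = M0 * max 1 X"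
      by (simp add: M1tilde_def X_def)
    have symH0: "symmetric_mat (H0 k)" using run by (simp add: alg2_run_def)
    have xk: "x k \<in> edom \<psi>" by (rule edomall[OF x0 run])
    have scb: "spec_norm (s *\<^sub>R H0 k) \<le> max \<bar>s * m0\<bar> \<bar>s * M0\<bar>" if s: "s > 0" for s
    proof (rule spec_bound[OF sym_scale[OF symH0]])
      fix w :: "real^'n"
      show "(s * m0) * (norm w)\<^sup>2 \<le> w \<bullet> ((s *\<^sub>R H0 k) *v w)"
        using mult_left_mono[OF loew_lo[OF lw[of k], of w], of s] s unfolding quad_scale by (simp add: algebra_simps)
      show "w \<bullet> ((s *\<^sub>R H0 k) *v w) \<le> (s * M0) * (norm w)\<^sup>2"
        using mult_left_mono[OF loew_hi[OF hw[of k], of w], of s] s unfolding quad_scale by (simp add: algebra_simps)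
    qed
    have sb: "1 / \<beta> ^ J k \<le> max 1 X"
    proof (cases "J k")
      case 0 then show ?thesis by simp
    next
      case (Suc i)
      define H' where "H' = (1 / \<beta> ^ i) *\<^sub>R H0 k"
      have H': "cand1 \<beta> (H0 k) i = H'" by (simp add: cand1_def H'_def)
      have inex: "inexact \<eta> (Qm g \<psi> (x k) H') (D k i)"
        using run Suc H' unfolding alg2_run_def by (metis le_SucI order_refl)
      have rej: "\<not> suff_dec f \<psi> (Qm g \<psi> (x k) H') \<gamma> (x k) (D k i)"
        using run Suc H' unfolding alg2_run_def by (metis lessI)
      have symH': "symmetric_mat H'" unfolding H'_def by (rule sym_scale[OF symH0])
      have lt: "lambda_min H' < T"
        using reject[OF grad Llip Lpos psi_convex psi_proper psi_closed gamma xk symH' \<eta> inex rej]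
        by (simp add: T_def)
      have bi: "1 / \<beta> ^ i > 0" using \<beta> by simp
      have ge: "(1 / \<beta> ^ i) * m0 \<le> lambda_min H'"
      proof (rule lmin_ge[OF symH'])
        fix w :: "real^'n"
        show "((1 / \<beta> ^ i) * m0) * (norm w)\<^sup>2 \<le> w \<bullet> (H' *v w)"
          using mult_left_mono[OF loew_lo[OF lw[of k], of w], of "1 / \<beta> ^ i"] bi
          unfolding H'_def quad_scale by (simp add: algebra_simps)
      qed
      have "(1 / \<beta> ^ i) * m0 < T" using lt ge by simp
      then have "1 / \<beta> ^ i < T / m0" using M0 by (simp add: field_simps)
      then have "(1 / \<beta> ^ i) / \<beta> \<le> (T / m0) / \<beta>" using \<beta> by (intro divide_right_mono) auto
      moreover have "(1 / \<beta> ^ i) / \<beta> = 1 / \<beta> ^ J k" using Suc by simp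
      moreover have "(T / m0) / \<beta> = X" by (simp add: XT)
      ultimately show ?thesis by (metis max.coboundedI2)
    qed
    have "spec_norm (cand1 \<beta> (H0 k) (J k)) \<le> max \<bar>(1 / \<beta> ^ J k) * m0\<bar> \<bar>(1 / \<beta> ^ J k) * M0\<bar>"
      unfolding cand1_def by (rule scb) (use \<beta> in simp)
    also have "\<dots> \<le> M0 * max 1 X" by (rule real1[OF M0 _ sb]) (use \<beta> in simp)
    finally show "spec_norm (cand1 \<beta> (H0 k) (J k)) \<le> M1tilde L \<beta> \<gamma> m0 M0 \<eta>" using M1 by simp
  qed
  show ?thesis using P1 P2 P3 by blast
qed

end
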